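(* Let $g$ be an $n$-person no-sink WTT game form satisfying the standing assumptions below, and suppose $g$ contains a $k$-box for some $1\le k\le n$. Then $g$ contains a $(k-1)$-box or a $1$-box.
   Context: Let $X_1,\dots,X_n$ and $A$ be finite nonempty sets. An $n$-person game form is a map $g: X_1\times\cdots\times X_n\to A$; elements of $X=X_1\times\cdots\times X_n$ are strategy profiles. For a direction $i\in[n]$ write $X_{-i}=\prod_{t\neq i}X_t$, and for $s\in X_i$, $y\in X_{-i}$ write $(s,y)$ for the profile with $i$-th coordinate $s$ and other coordinates $y$. The hyperplane perpendicular to direction $i$ at $s\in X_i$ is $H_s=\{x\in X: x_i=s\}$; for a profile $x$ write $H_i^x$ for the hyperplane perpendicular to direction $i$ containing $x$. $g$ is weakly totally tight (WTT) if for every $i\in[n]$, all $s\neq s'$ in $X_i$ and all $y\neq y'$ in $X_{-i}$, at least one of $g(s,y)=g(s,y')$, $g(s,y)=g(s',y)$, $g(s',y')=g(s',y)$, $g(s',y')=g(s,y')$ holds. A set $S\subseteq X$ is a constant region if there is $c\in A$ with $g(x)=c$ for all $x\in S$. For distinct $j,k\in X_i$, $H_j^{\neq}(k)=\{(j,y): y\in X_{-i},\ g(j,y)\neq g(k,y)\}$. We write $H_j\stackrel{c}{\longrightarrow}H_k$ if $g(x)=c$ for all $x\in H_j^{\neq}(k)$, and $H_j\stackrel{c}{\Longrightarrow}H_k$ if $H_j\stackrel{c}{\longrightarrow}H_k$ and there is no outcome $d$ with $H_k\stackrel{d}{\longrightarrow}H_j$. If there exist $k\in X_i\setminus\{j\}$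 and $c$ with $H_j\stackrel{c}{\Longrightarrow}H_k$, $c$ is called the proper outcome of $H_j$ (for WTT $g$ it does not depend on $k$). We say an outcome $a$ is not the proper outcome of a hyperplane $H$ if $H$ has no proper outcome or its proper outcome differs from $a$. $H_j$ is a sink hyperplane if for every $k\in X_i\setminus\{j\}$ there is an outcome $c_k$ with $H_k\stackrel{c_k}{\longrightarrow}H_j$; $g$ is no-sink if there is no sink hyperplane in any direction. A WTT no-sink $g$ contains a $k$-box if there are profiles $x,y$ such that: $g(x)\neq g(y)$; $x$ and $y$ differ in exactly $k$ coordinates $i_1,\dots,i_k$; and for every $1\le t\le k$, $g(x)$ is not the proper outcome of $H_{i_t}^x$ and $g(y)$ is not the proper outcome of $H_{i_t}^y$. Standing assumptions: no hyperplane of $g$ is a constant region, and for every $i$ and distinct $j,k\in X_i$ there is $y\in X_{-i}$ with $g(j,y)\neq g(k,y)$. *)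

theory Defs
  imports "HOL-Library.FuncSet"
begin

text \<open>An element y of X_{-i} is an extensional function on {..<n} - {i};
  the profile (s,y) is y(i := s).\<close>

definition profiles :: "nat \<Rightarrow> (nat \<Rightarrow> 'x set) \<Rightarrow> (nat \<Rightarrow> 'x) set" where
  "profiles n X = PiE {..<n} X"

definition others :: "nat \<Rightarrow> (nat \<Rightarrow> 'x set) \<Rightarrow> nat \<Rightarrow> (nat \<Rightarrow> 'x) set" where
  "others n X i = PiE ({..<n} - {i}) X"

definition WTT :: "nat \<Rightarrow> (nat \<Rightarrow> 'x set) \<Rightarrow> ((nat \<Rightarrow> 'x) \<Rightarrow> 'o) \<Rightarrow> bool" where
  "WTT n X g \<longleftrightarrow>
     (\<forall>i<n. \<forall>s\<in>X i. \<forall>t\<in>X i. s \<noteq> t \<longrightarrow>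
       (\<forall>y\<in>others n X i. \<forall>z\<in>others n X i. y \<noteq> z \<longrightarrow>
          g (y(i := s)) = g (z(i := s)) \<or> g (y(i := s)) = g (y(i := t)) \<or>
          g (z(i := t)) = g (y(i := t)) \<or> g (z(i := t)) = g (z(i := s))))"

definition hyperplane :: "nat \<Rightarrow> (nat \<Rightarrow> 'x set) \<Rightarrow> nat \<Rightarrow> 'x \<Rightarrow> (nat \<Rightarrow> 'x) set" where
  "hyperplane n X i s = {x \<in> profiles n X. x i = s}"

definition constant_region :: "'o set \<Rightarrow> ((nat \<Rightarrow> 'x) \<Rightarrow> 'o) \<Rightarrow> (nat \<Rightarrow> 'x) set \<Rightarrow> bool" where
  "constant_region A g S \<longleftrightarrow> (\<exists>c\<in>A. \<forall>x\<in>S. g x = c)"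

definition Hneq :: "nat \<Rightarrow> (nat \<Rightarrow> 'x set) \<Rightarrow> ((nat \<Rightarrow> 'x) \<Rightarrow> 'o) \<Rightarrow> nat \<Rightarrow> 'x \<Rightarrow> 'x \<Rightarrow> (nat \<Rightarrow> 'x) set" where
  "Hneq n X g i j k = {y(i := j) | y. y \<in> others n X i \<and> g (y(i := j)) \<noteq> g (y(i := k))}"

definition arrow :: "nat \<Rightarrow> (nat \<Rightarrow> 'x set) \<Rightarrow> ((nat \<Rightarrow> 'x) \<Rightarrow> 'o) \<Rightarrow> nat \<Rightarrow> 'x \<Rightarrow> 'o \<Rightarrow> 'x \<Rightarrow> bool" where
  "arrow n X g i j c k \<longleftrightarrow> (\<forall>x\<in>Hneq n X g i j k. g x = c)"

definition darrow :: "'o set \<Rightarrow> nat \<Rightarrow> (nat \<Rightarrow> 'x set) \<Rightarrow> ((nat \<Rightarrow> 'x) \<Rightarrow> 'o) \<Rightarrow> nat \<Rightarrow> 'x \<Rightarrow> 'o \<Rightarrow> 'x \<Rightarrow> bool" where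
  "darrow A n X g i j c k \<longleftrightarrow> arrow n X g i j c k \<and> \<not> (\<exists>d\<in>A. arrow n X g i k d j)"

definition proper_outcome :: "'o set \<Rightarrow> nat \<Rightarrow> (nat \<Rightarrow> 'x set) \<Rightarrow> ((nat \<Rightarrow> 'x) \<Rightarrow> 'o) \<Rightarrow> nat \<Rightarrow> 'x \<Rightarrow> 'o \<Rightarrow> bool" where
  "proper_outcome A n X g i j c \<longleftrightarrow> (\<exists>k\<in>X i - {j}. darrow A n X g i j c k)"

definition sink_hyperplane :: "'o set \<Rightarrow> nat \<Rightarrow> (nat \<Rightarrow> 'x set) \<Rightarrow> ((nat \<Rightarrow> 'x) \<Rightarrow> 'o) \<Rightarrow> nat \<Rightarrow> 'x \<Rightarrow> bool" where
  "sink_hyperplane A n X g i j \<longleftrightarrow> (\<forall>k\<in>X i - {j}. \<exists>c\<in>A. arrow n X g i k c j)"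

definition no_sink :: "'o set \<Rightarrow> nat \<Rightarrow> (nat \<Rightarrow> 'x set) \<Rightarrow> ((nat \<Rightarrow> 'x) \<Rightarrow> 'o) \<Rightarrow> bool" where
  "no_sink A n X g \<longleftrightarrow> (\<forall>i<n. \<forall>j\<in>X i. \<not> sink_hyperplane A n X g i j)"

definition standing_assumptions :: "'o set \<Rightarrow> nat \<Rightarrow> (nat \<Rightarrow> 'x set) \<Rightarrow> ((nat \<Rightarrow> 'x) \<Rightarrow> 'o) \<Rightarrow> bool" where
  "standing_assumptions A n X g \<longleftrightarrow>
     (\<forall>i<n. \<forall>s\<in>X i. \<not> constant_region A g (hyperplane n X i s)) \<and>
     (\<forall>i<n. \<forall>j\<in>X i. \<forall>k\<in>X i. j \<noteq> k \<longrightarrow>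
        (\<exists>y\<in>others n X i. g (y(i := j)) \<noteq> g (y(i := k))))"

definition contains_box :: "'o set \<Rightarrow> nat \<Rightarrow> (nat \<Rightarrow> 'x set) \<Rightarrow> ((nat \<Rightarrow> 'x) \<Rightarrow> 'o) \<Rightarrow> nat \<Rightarrow> bool" where
  "contains_box A n X g m \<longleftrightarrow>
     (\<exists>x\<in>profiles n X. \<exists>y\<in>profiles n X. g x \<noteq> g y \<and>
        card {i\<in>{..<n}. x i \<noteq> y i} = m \<and>
        (\<forall>i<n. x i \<noteq> y i \<longrightarrow>
           \<not> proper_outcome A n X g i (x i) (g x) \<and> \<not> proper_outcome A n X g i (y i) (g y)))"

end

theory Submission
  imports Defs
begin

lemma upd_prof:
  assumes x: "x \<in> profiles n X" and y: "y \<in> profiles n X" and i: "i < n"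
  shows "x(i := y i) \<in> profiles n X"
proof -
  have yi: "y i \<in> X i" using PiE_mem[of y "{..<n}" X i] y i unfolding profiles_def by simp
  have "x(i := y i) \<in> PiE (insert i {..<n}) X"
    using PiE_fun_upd[of "y i" X i x "{..<n}"] yi x unfolding profiles_def by simp
  moreover have "insert i {..<n} = {..<n}" using i by (simp add: insert_absorb)
  ultimately show ?thesis unfolding profiles_def by simp
qed

lemma restr_upd:
  assumes x: "x \<in> profiles n X" and i: "i < n"
  shows "(restrict x ({..<n} - {i}))(i := v) = x(i := v)"
proof
  fix t show "((restrict x ({..<n} - {i}))(i := v)) t = (x(i := v)) t"
  proof (cases "t = i")
    case True then show ?thesis by simp
  next
    case False
    show ?thesis
    proof (cases "t < n")
      case True then show ?thesis using False by simp
    next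
      case nt: False
      have "x t = undefined" using PiE_arb[of x "{..<n}" X t] x nt unfolding profiles_def by simp
      then show ?thesis using False nt by simp
    qed
  qed
qed

lemma restr_others:
  assumes x: "x \<in> profiles n X"
  shows "restrict x ({..<n} - {i}) \<in> others n X i"
  unfolding others_def restrict_PiE_iff
proof
  fix t assume "t \<in> {..<n} - {i}"
  then show "x t \<in> X t" using PiE_mem[of x "{..<n}" X t] x unfolding profiles_def by simp
qed

lemma half:
  assumes x: "x \<in> profiles n X" and y: "y \<in> profiles n X" and gxy: "g x \<noteq> g y"
    and cd: "card {t\<in>{..<n}. x t \<noteq> y t} = k"
    and bx: "\<forall>t<n. x t \<noteq> y t \<longrightarrow> \<not> proper_outcome A n X g t (x t) (g x) \<and> \<not> proper_outcome A n X g t (y t) (g y)"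
    and i: "i < n" "x i \<noteq> y i"
  shows "contains_box A n X g (k-1) \<or> contains_box A n X g 1 \<or>
         (g (x(i:=y i)) \<noteq> g x \<and> g (x(i:=y i)) \<noteq> g y)"
proof -
  define z where "z = x(i := y i)"
  have zp: "z \<in> profiles n X" unfolding z_def using upd_prof[OF x y i(1)] .
  have s1: "{t\<in>{..<n}. z t \<noteq> y t} = {t\<in>{..<n}. x t \<noteq> y t} - {i}"
    unfolding z_def by auto
  have c1: "card {t\<in>{..<n}. z t \<noteq> y t} = k - 1"
    unfolding s1 using cd i by (simp add: card_Diff_singleton)
  have s2: "{t\<in>{..<n}. x t \<noteq> z t} = {i}" unfolding z_def using i by auto
  show ?thesis
  proof (cases "g z = g x")
    case True
    have "contains_box A n X g (k-1)"
      unfolding contains_box_def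
    proof (rule bexI[of _ z], rule bexI[of _ y], intro conjI allI impI)
      fix t assume t: "t < n" "z t \<noteq> y t"
      then have "t \<noteq> i" "z t = x t" "x t \<noteq> y t" unfolding z_def by (auto split: if_splits)
      then show "\<not> proper_outcome A n X g t (z t) (g z)" "\<not> proper_outcome A n X g t (y t) (g y)"
        using bx t(1) True by simp_all
    qed (use True gxy c1 zp y in auto)
    then show ?thesis by simp
  next
    case False
    show ?thesis
    proof (cases "proper_outcome A n X g i (y i) (g z)")
      case True
      then have "g z \<noteq> g y" using bx i by auto
      then show ?thesis using False unfolding z_def by auto
    next
      case nP: False
      have "contains_box A n X g 1"
        unfolding contains_box_def
      proof (rule bexI[of _ x], rule bexI[of _ z], intro conjI allI impI)
        fix t assume t: "t < n" "x t \<noteq> z t"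
        then have "t = i" "z i = y i" unfolding z_def by (auto split: if_splits)
        then show "\<not> proper_outcome A n X g t (x t) (g x)" "\<not> proper_outcome A n X g t (z t) (g z)"
          using bx i nP by simp_all
      qed (use False s2 x zp in auto)
      then show ?thesis by simp
    qed
  qed
qed

theorem mainTheorem6:
  fixes n :: nat and X :: "nat \<Rightarrow> 'x set" and A :: "'o set"
    and g :: "(nat \<Rightarrow> 'x) \<Rightarrow> 'o" and k :: nat
  assumes "\<forall>i<n. finite (X i) \<and> X i \<noteq> {}"
    and "finite A" and "A \<noteq> {}"
    and "g ` profiles n X \<subseteq> A"
    and "WTT n X g"
    and "no_sink A n X g"
    and "standing_assumptions A n X g"
    and "1 \<le> k" and "k \<le> n"
    and "contains_box A n X g k"
  shows "contains_box A n X g (k - 1) \<or> contains_box A n X g 1"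
proof (cases "k = 1")
  case True then show ?thesis using assms(10) by simp
next
  case False
  then have k2: "2 \<le> k" using assms(8) by simp
  obtain x y where x: "x \<in> profiles n X" and y: "y \<in> profiles n X" and gxy: "g x \<noteq> g y"
    and cd: "card {t\<in>{..<n}. x t \<noteq> y t} = k"
    and bx: "\<forall>t<n. x t \<noteq> y t \<longrightarrow> \<not> proper_outcome A n X g t (x t) (g x) \<and> \<not> proper_outcome A n X g t (y t) (g y)"
    using assms(10) unfolding contains_box_def by blast
  define D where "D = {t\<in>{..<n}. x t \<noteq> y t}"
  have "D \<noteq> {}" using cd k2 unfolding D_def[symmetric] by (metis card.empty not_numeral_le_zero)
  then obtain i where iD: "i \<in> D" by blast
  have "D - {i} \<noteq> {}"
  proof
    assume "D - {i} = {}"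
    then have "D \<subseteq> {i}" by blast
    then have "card D \<le> 1" using card_mono[of "{i}" D] by simp
    then show False using cd k2 unfolding D_def by simp
  qed
  then obtain j where jD: "j \<in> D" "j \<noteq> i" by blast
  have i: "i < n" "x i \<noteq> y i" using iD unfolding D_def by auto
  have "{t\<in>{..<n}. y t \<noteq> x t} = {t\<in>{..<n}. x t \<noteq> y t}" by auto
  then have cd': "card {t\<in>{..<n}. y t \<noteq> x t} = k" using cd by simp
  have bx': "\<forall>t<n. y t \<noteq> x t \<longrightarrow> \<not> proper_outcome A n X g t (y t) (g y) \<and> \<not> proper_outcome A n X g t (x t) (g x)"
  proof (intro allI impI)
    fix t assume t: "t < n" "y t \<noteq> x t"
    then have "x t \<noteq> y t" by simp
    then have "\<not> proper_outcome A n X g t (x t) (g x) \<and> \<not> proper_outcome A n X g t (y t) (g y)"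
      using bx t(1) by blast
    then show "\<not> proper_outcome A n X g t (y t) (g y) \<and> \<not> proper_outcome A n X g t (x t) (g x)" by blast
  qed
  note h1 = half[OF x y gxy cd bx i]
  note h2 = half[OF y x gxy[symmetric] cd' bx' i(1) i(2)[symmetric]]
  show ?thesis
  proof (rule ccontr)
    assume nc: "\<not> ?thesis"
    then have nc1: "\<not> contains_box A n X g (k - 1)" "\<not> contains_box A n X g 1" by simp_all
    have a: "g (x(i:=y i)) \<noteq> g x" "g (x(i:=y i)) \<noteq> g y"
      and b: "g (y(i:=x i)) \<noteq> g y" "g (y(i:=x i)) \<noteq> g x"
      using h1 h2 nc1 by simp_all
    define yy where "yy = restrict x ({..<n} - {i})"
    define zz where "zz = restrict y ({..<n} - {i})"
    have yyo: "yy \<in> others n X i" unfolding yy_def using restr_others[OF x] .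
    have zzo: "zz \<in> others n X i" unfolding zz_def using restr_others[OF y] .
    have "yy j \<noteq> zz j" using jD unfolding yy_def zz_def D_def by auto
    then have ne: "yy \<noteq> zz" by auto
    have xi: "x i \<in> X i" using x i unfolding profiles_def by auto
    have yi: "y i \<in> X i" using y i unfolding profiles_def by auto
    have e1: "yy(i := x i) = x" unfolding yy_def restr_upd[OF x i(1)] by simp
    have e2: "yy(i := y i) = x(i := y i)" unfolding yy_def restr_upd[OF x i(1)] by simp
    have e3: "zz(i := y i) = y" unfolding zz_def restr_upd[OF y i(1)] by simp
    have e4: "zz(i := x i) = y(i := x i)" unfolding zz_def restr_upd[OF y i(1)] by simp
    have "g (yy(i := x i)) = g (zz(i := x i)) \<or> g (yy(i := x i)) = g (yy(i := y i)) \<or>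
          g (zz(i := y i)) = g (yy(i := y i)) \<or> g (zz(i := y i)) = g (zz(i := x i))"
      by (rule assms(5)[unfolded WTT_def, rule_format, OF i(1) xi yi i(2) yyo zzo ne])
    then show False unfolding e1 e2 e3 e4 using a b gxy by auto
  qed
qed

end
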